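(* Let $m,n \geq 2$ be integers with $(m,n) \neq (2,2)$. Then $2$ is the unique typical subrank of real tensors in $\mathbb{R}^2 \otimes \mathbb{R}^m \otimes \mathbb{R}^n$.
   Context: For $r \geq 0$ let $I_r := \sum_{j=1}^r e_j \otimes e_j \otimes e_j$. The subrank of $T \in \mathbb{R}^{n_1} \otimes \mathbb{R}^{n_2} \otimes \mathbb{R}^{n_3}$ is $Q(T) := \max\{ r \mid \exists\ \mathbb{R}\text{-linear } \varphi_i : \mathbb{R}^{n_i} \to \mathbb{R}^r,\ (\varphi_1 \otimes \varphi_2 \otimes \varphi_3) T = I_r\}$. An integer $r$ is a typical subrank of the format $n_1\times n_2\times n_3$ if $\{T \mid Q(T) = r\}$ contains a nonempty Euclidean-open subset of $\mathbb{R}^{n_1} \otimes \mathbb{R}^{n_2} \otimes \mathbb{R}^{n_3}$. *)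

theory Defs
  imports "HOL-Analysis.Analysis"
begin

text \<open>Real tensors in R^n1 (x) R^n2 (x) R^n3 are represented as functions
  nat \<Rightarrow> nat \<Rightarrow> nat \<Rightarrow> real (0-based coordinates) that vanish outside
  the box {0..<n1} x {0..<n2} x {0..<n3}.\<close>

definition tensor_space :: "nat \<Rightarrow> nat \<Rightarrow> nat \<Rightarrow> (nat \<Rightarrow> nat \<Rightarrow> nat \<Rightarrow> real) set" where
  "tensor_space n1 n2 n3 =
     {T. \<forall>i j k. \<not> (i < n1 \<and> j < n2 \<and> k < n3) \<longrightarrow> T i j k = 0}"

text \<open>A linear map R^n \<rightarrow> R^r is given by an r x n matrix A (entries A a i,
  a < r, i < n). The image of T under phi1 (x) phi2 (x) phi3.\<close>

definition tensor_apply ::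
  "nat \<Rightarrow> nat \<Rightarrow> nat \<Rightarrow> (nat \<Rightarrow> nat \<Rightarrow> real) \<Rightarrow> (nat \<Rightarrow> nat \<Rightarrow> real) \<Rightarrow> (nat \<Rightarrow> nat \<Rightarrow> real)
     \<Rightarrow> (nat \<Rightarrow> nat \<Rightarrow> nat \<Rightarrow> real) \<Rightarrow> nat \<Rightarrow> nat \<Rightarrow> nat \<Rightarrow> real" where
  "tensor_apply n1 n2 n3 A B C T a b c =
     (\<Sum>i<n1. \<Sum>j<n2. \<Sum>k<n3. A a i * B b j * C c k * T i j k)"

text \<open>Unit tensor I_r = sum_{j<r} e_j (x) e_j (x) e_j, as a function on {0..<r}^3.\<close>

definition unit_tensor :: "nat \<Rightarrow> nat \<Rightarrow> nat \<Rightarrow> real" where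
  "unit_tensor a b c = (if a = b \<and> b = c then 1 else 0)"

definition restricts_to_unit :: "nat \<Rightarrow> nat \<Rightarrow> nat \<Rightarrow> (nat \<Rightarrow> nat \<Rightarrow> nat \<Rightarrow> real) \<Rightarrow> nat \<Rightarrow> bool" where
  "restricts_to_unit n1 n2 n3 T r \<longleftrightarrow>
     (\<exists>A B C. \<forall>a<r. \<forall>b<r. \<forall>c<r.
        tensor_apply n1 n2 n3 A B C T a b c = unit_tensor a b c)"

definition subrank :: "nat \<Rightarrow> nat \<Rightarrow> nat \<Rightarrow> (nat \<Rightarrow> nat \<Rightarrow> nat \<Rightarrow> real) \<Rightarrow> nat" where
  "subrank n1 n2 n3 T = (GREATEST r. restricts_to_unit n1 n2 n3 T r)"

text \<open>Euclidean-open subsets of the tensor space (all norms on a finite-dimensional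
  space are equivalent; we use the max-norm over coordinates).\<close>

definition tensor_open :: "nat \<Rightarrow> nat \<Rightarrow> nat \<Rightarrow> (nat \<Rightarrow> nat \<Rightarrow> nat \<Rightarrow> real) set \<Rightarrow> bool" where
  "tensor_open n1 n2 n3 U \<longleftrightarrow> U \<subseteq> tensor_space n1 n2 n3 \<and>
     (\<forall>T\<in>U. \<exists>e>0. \<forall>S\<in>tensor_space n1 n2 n3.
        (\<forall>i<n1. \<forall>j<n2. \<forall>k<n3. \<bar>S i j k - T i j k\<bar> < e) \<longrightarrow> S \<in> U)"

definition typical_subrank :: "nat \<Rightarrow> nat \<Rightarrow> nat \<Rightarrow> nat \<Rightarrow> bool" where
  "typical_subrank n1 n2 n3 r \<longleftrightarrow>
     (\<exists>U. U \<noteq> {} \<and> tensor_open n1 n2 n3 U \<and>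
          U \<subseteq> {T \<in> tensor_space n1 n2 n3. subrank n1 n2 n3 T = r})"

end

theory Submission imports Defs "HOL-Computational_Algebra.Polynomial" begin
definition cr :: "(nat \<Rightarrow> nat \<Rightarrow> nat \<Rightarrow> 'a::comm_ring_1) \<Rightarrow> nat \<Rightarrow> nat \<Rightarrow> 'a" where
  "cr t i l = (if l = 0 then t i 0 1 * t i 1 2 - t i 0 2 * t i 1 1
     else if l = 1 then t i 0 2 * t i 1 0 - t i 0 0 * t i 1 2
     else t i 0 0 * t i 1 1 - t i 0 1 * t i 1 0)"

definition pv :: "(nat \<Rightarrow> nat \<Rightarrow> nat \<Rightarrow> 'a::comm_ring_1) \<Rightarrow> nat \<Rightarrow> nat \<Rightarrow> 'a" where
  "pv t a j = t a j 0 * cr t (1 - a) 0 + t a j 1 * cr t (1 - a) 1 + t a j 2 * cr t (1 - a) 2"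

definition Pd :: "(nat \<Rightarrow> nat \<Rightarrow> nat \<Rightarrow> 'a::comm_ring_1) \<Rightarrow> 'a" where
  "Pd t = pv t 0 0 * pv t 1 1 - pv t 0 1 * pv t 1 0"

lemma cr_hom: "cr (\<lambda>i j k. c * t i j k) i l = c^2 * cr t i l"
  by (simp add: cr_def algebra_simps power2_eq_square)

lemma pv_hom: "pv (\<lambda>i j k. c * t i j k) a j = c^3 * pv t a j"
  unfolding pv_def cr_hom by (simp add: algebra_simps power3_eq_cube power2_eq_square)

lemma Pd_hom: "Pd (\<lambda>i j k. c * t i j k) = c^6 * Pd t"
proof -
  have "c^6 = c^3 * c^3" by (simp flip: power_add)
  then show ?thesis unfolding Pd_def pv_hom by (simp add: algebra_simps)
qed

lemma cr_poly: "poly (cr (\<lambda>i j k. [:K i j k, T i j k:]) i l) u = cr (\<lambda>i j k. K i j k + u * T i j k) i l"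
  by (simp add: cr_def algebra_simps)
lemma pv_poly: "poly (pv (\<lambda>i j k. [:K i j k, T i j k:]) a j) u = pv (\<lambda>i j k. K i j k + u * T i j k) a j"
  by (simp only: pv_def poly_add poly_mult cr_poly) simp
lemma Pd_poly: "poly (Pd (\<lambda>i j k. [:K i j k, T i j k:])) u = Pd (\<lambda>i j k. K i j k + u * T i j k)"
  by (simp only: Pd_def poly_diff poly_mult pv_poly)

lemma Pd_tendsto:
  assumes "\<And>i j k. i < 2 \<Longrightarrow> j < 2 \<Longrightarrow> k < 3 \<Longrightarrow> ((\<lambda>N. S N i j k) \<longlongrightarrow> (T i j k::real)) F"
  shows "((\<lambda>N. Pd (S N)) \<longlongrightarrow> Pd T) F"
  unfolding Pd_def pv_def cr_def by (auto intro!: tendsto_intros assms)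

lemma det3_rank2:
  fixes x y g h :: "nat \<Rightarrow> 'a::comm_ring_1"
  defines "M \<equiv> \<lambda>a b. x a * g b + y a * h b"
  shows "M 0 0 * (M 1 1 * M 2 2 - M 1 2 * M 2 1) - M 0 1 * (M 1 0 * M 2 2 - M 1 2 * M 2 0)
         + M 0 2 * (M 1 0 * M 2 1 - M 1 1 * M 2 0) = 0"
  unfolding M_def by (simp add: algebra_simps)

lemma sum_reduce: "(N::nat) \<le> M \<Longrightarrow> (\<And>x. x \<ge> N \<Longrightarrow> f x = 0) \<Longrightarrow> sum f {..<M} = sum f {..<N}"
proof (rule sum.mono_neutral_right)
  assume "N \<le> M" "\<And>x. x \<ge> N \<Longrightarrow> f x = 0"
  then show "finite {..<M}" "{..<N} \<subseteq> {..<M}" "\<forall>i\<in>{..<M} - {..<N}. f i = 0" by auto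
qed

lemma tapply_2: "tensor_apply 2 m n A B C T a b c =
   A a 0 * (\<Sum>j<m. \<Sum>k<n. B b j * C c k * T 0 j k) + A a 1 * (\<Sum>j<m. \<Sum>k<n. B b j * C c k * T 1 j k)"
  by (simp add: tensor_apply_def numeral_2_eq_2 sum_distrib_left mult.assoc)

lemma rtu_le2:
  assumes "restricts_to_unit 2 m n T r" shows "r \<le> 2"
proof (rule ccontr)
  assume "\<not> r \<le> 2"
  then have r3: "3 \<le> r" by simp
  from assms obtain A B C where H: "\<forall>a<r. \<forall>b<r. \<forall>c<r. tensor_apply 2 m n A B C T a b c = unit_tensor a b c"
    unfolding restricts_to_unit_def by blast
  define g where "g b = (\<Sum>j<m. \<Sum>k<n. B b j * C b k * T 0 j k)" for b
  define h where "h b = (\<Sum>j<m. \<Sum>k<n. B b j * C b k * T 1 j k)" for b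
  define M where "M \<equiv> \<lambda>a b. (\<lambda>a. A a 0) a * g b + (\<lambda>a. A a 1) a * h b"
  have HM: "M a b = unit_tensor a b b" if "a < 3" "b < 3" for a b
    using H that r3 by (simp add: M_def g_def h_def tapply_2)
  have "M 0 0 * (M 1 1 * M 2 2 - M 1 2 * M 2 1) - M 0 1 * (M 1 0 * M 2 2 - M 1 2 * M 2 0)
         + M 0 2 * (M 1 0 * M 2 1 - M 1 1 * M 2 0) = 0"
    unfolding M_def by (rule det3_rank2)
  then show False by (simp add: HM unit_tensor_def)
qed

lemma subrank_eq2:
  assumes "restricts_to_unit 2 m n T 2" shows "subrank 2 m n T = 2"
  unfolding subrank_def using assms rtu_le2 by (intro Greatest_equality) auto

lemma orth: "j < 2 \<Longrightarrow> T i j 0 * cr T i 0 + T i j 1 * cr T i 1 + T i j 2 * cr T i 2 = 0"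
  by (cases j) (auto simp: cr_def algebra_simps less_Suc_eq)

lemma witness:
  fixes T :: "nat \<Rightarrow> nat \<Rightarrow> nat \<Rightarrow> real"
  assumes D: "Pd T \<noteq> 0" and m: "m \<ge> 2" and n: "n \<ge> 3"
  shows "restricts_to_unit 2 m n T 2"
proof -
  define D where "D = Pd T"
  define p where "p j = pv T 0 j" for j
  define q where "q j = pv T 1 j" for j
  have Dpq: "D = p 0 * q 1 - p 1 * q 0" by (simp add: D_def p_def q_def Pd_def)
  have D0: "D \<noteq> 0" using assms by (simp add: D_def)
  define A :: "nat \<Rightarrow> nat \<Rightarrow> real" where "A a i = (if a = i then 1 else 0)" for a i
  define V :: "nat \<Rightarrow> nat \<Rightarrow> real" where "V b j = (if b = 0 then (if j = 0 then q 1 / D else - q 0 / D)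
      else (if j = 0 then - p 1 / D else p 0 / D))" for b j
  define B :: "nat \<Rightarrow> nat \<Rightarrow> real" where "B b j = (if j < 2 then V b j else 0)" for b j
  define C :: "nat \<Rightarrow> nat \<Rightarrow> real" where "C c k = (if k < 3 then cr T (1 - c) k else 0)" for c k
  have S: "(\<Sum>j<m. \<Sum>k<n. B b j * C c k * T i j k) =
      V b 0 * (T i 0 0 * cr T (1 - c) 0 + T i 0 1 * cr T (1 - c) 1 + T i 0 2 * cr T (1 - c) 2)
    + V b 1 * (T i 1 0 * cr T (1 - c) 0 + T i 1 1 * cr T (1 - c) 1 + T i 1 2 * cr T (1 - c) 2)"
    (is "_ = ?R") for b c i
  proof -
    have "(\<Sum>j<m. \<Sum>k<n. B b j * C c k * T i j k) = (\<Sum>j<2. \<Sum>k<n. B b j * C c k * T i j k)"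
      using m by (intro sum_reduce) (auto simp: B_def)
    also have "\<dots> = (\<Sum>j<2. \<Sum>k<3. B b j * C c k * T i j k)"
      using n by (intro sum.cong refl sum_reduce) (auto simp: C_def)
    also have "\<dots> = ?R"
      by (simp add: B_def C_def numeral_3_eq_3 numeral_2_eq_2 algebra_simps)
    finally show ?thesis .
  qed
  have P0: "T 0 j 0 * cr T 1 0 + T 0 j 1 * cr T 1 1 + T 0 j 2 * cr T 1 2 = p j" for j
    by (simp add: p_def pv_def)
  have Q0: "T 1 j 0 * cr T 0 0 + T 1 j 1 * cr T 0 1 + T 1 j 2 * cr T 0 2 = q j" for j
    by (simp add: q_def pv_def)
  have O0: "T 0 j 0 * cr T 0 0 + T 0 j 1 * cr T 0 1 + T 0 j 2 * cr T 0 2 = 0" if "j < 2" for j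
    using orth[OF that] .
  have O1: "T 1 j 0 * cr T 1 0 + T 1 j 1 * cr T 1 1 + T 1 j 2 * cr T 1 2 = 0" if "j < 2" for j
    using orth[OF that] .
  have V1: "V 0 0 * p 0 + V 0 1 * p 1 = 1" "V 0 0 * q 0 + V 0 1 * q 1 = 0"
     "V 1 0 * p 0 + V 1 1 * p 1 = 0" "V 1 0 * q 0 + V 1 1 * q 1 = 1"
  proof -
    have "V 0 0 * p 0 + V 0 1 * p 1 = (p 0 * q 1 - p 1 * q 0) / D" "V 1 1 * q 1 + V 1 0 * q 0 = (p 0 * q 1 - p 1 * q 0) / D"
      by (simp_all add: V_def diff_divide_distrib algebra_simps)
    then show "V 0 0 * p 0 + V 0 1 * p 1 = 1" "V 1 0 * q 0 + V 1 1 * q 1 = 1"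
      using D0 unfolding Dpq[symmetric] by (simp_all add: add.commute)
    show "V 0 0 * q 0 + V 0 1 * q 1 = 0" "V 1 0 * p 0 + V 1 1 * p 1 = 0"
      by (simp_all add: V_def algebra_simps)
  qed
  have two: "x < 2 \<Longrightarrow> x = 0 \<or> x = 1" for x :: nat by auto
  show ?thesis unfolding restricts_to_unit_def
  proof (intro exI allI impI)
    fix a b c :: nat assume "a < 2" "b < 2" "c < 2"
    then have "a = 0 \<or> a = 1" "b = 0 \<or> b = 1" "c = 0 \<or> c = 1" by (auto dest: two)
    then show "tensor_apply 2 m n A B C T a b c = unit_tensor a b c"
      by (auto simp: tapply_2 S A_def unit_tensor_def P0[simplified] Q0[simplified] O0[simplified] O1[simplified] V1[simplified])
  qed
qed

lemma seq_close:
  fixes x :: "nat \<Rightarrow> real"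
  assumes "\<And>N. \<bar>x N - L\<bar> < inverse (real (Suc N))"
  shows "x \<longlonglongrightarrow> L"
proof (rule LIM_zero_cancel, rule Lim_null_comparison[OF _ LIMSEQ_inverse_real_of_nat])
  show "\<forall>\<^sub>F N in sequentially. norm (x N - L) \<le> inverse (real (Suc N))"
    using assms by (auto intro!: always_eventually less_imp_le)
qed

definition Kt :: "nat \<Rightarrow> nat \<Rightarrow> nat \<Rightarrow> real" where
  "Kt i j k = (if (i, j, k) \<in> {(0,0,0), (0,1,1), (1,0,1), (1,1,2)} then 1 else 0)"

lemma Pd_Kt: "Pd Kt = 1"
  by (simp add: Pd_def pv_def cr_def Kt_def)

lemma Kt_space: "m \<ge> 2 \<Longrightarrow> n \<ge> 3 \<Longrightarrow> Kt \<in> tensor_space 2 m n"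
  by (auto simp: tensor_space_def Kt_def)

lemma Kt_le: "\<bar>Kt i j k\<bar> \<le> 1"
  by (simp add: Kt_def)

lemma open_U:
  assumes m: "m \<ge> 2" and n: "n \<ge> 3"
  shows "tensor_open 2 m n {T \<in> tensor_space 2 m n. Pd T \<noteq> 0}"
  unfolding tensor_open_def
proof (intro conjI ballI)
  fix T assume "T \<in> {T \<in> tensor_space 2 m n. Pd T \<noteq> 0}"
  then have PT: "Pd T \<noteq> 0" by simp
  show "\<exists>e>0. \<forall>S\<in>tensor_space 2 m n. (\<forall>i<2. \<forall>j<m. \<forall>k<n. \<bar>S i j k - T i j k\<bar> < e) \<longrightarrow>
          S \<in> {T \<in> tensor_space 2 m n. Pd T \<noteq> 0}"
  proof (rule ccontr)
    assume "\<not> ?thesis"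
    then have H: "\<And>e. e > 0 \<Longrightarrow> \<exists>S. (\<forall>i<2. \<forall>j<m. \<forall>k<n. \<bar>S i j k - T i j k\<bar> < e) \<and> Pd S = 0"
      by (auto; blast)
    have "\<forall>N. \<exists>S. (\<forall>i<2. \<forall>j<m. \<forall>k<n. \<bar>S i j k - T i j k\<bar> < inverse (real (Suc N))) \<and> Pd S = 0"
      by (intro allI H) simp
    then obtain Sq where Sq: "\<And>N. (\<forall>i<2. \<forall>j<m. \<forall>k<n. \<bar>Sq N i j k - T i j k\<bar> < inverse (real (Suc N))) \<and> Pd (Sq N) = 0"
      by metis
    have "(\<lambda>N. Pd (Sq N)) \<longlonglongrightarrow> Pd T"
    proof (rule Pd_tendsto)
      fix i j k :: nat assume "i < 2" "j < 2" "k < 3"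
      then show "(\<lambda>N. Sq N i j k) \<longlonglongrightarrow> T i j k"
        using Sq m n by (intro seq_close) auto
    qed
    moreover have "(\<lambda>N. Pd (Sq N)) = (\<lambda>N. 0)" using Sq by auto
    ultimately have "Pd T = 0" using LIMSEQ_unique tendsto_const by metis
    then show False using PT by simp
  qed
qed auto

lemma main3:
  assumes m: "m \<ge> 2" and n: "n \<ge> 3"
  shows "typical_subrank 2 m n r \<longleftrightarrow> r = 2"
proof
  assume "r = 2"
  show "typical_subrank 2 m n r" unfolding typical_subrank_def
  proof (intro exI conjI)
    show "{T \<in> tensor_space 2 m n. Pd T \<noteq> 0} \<noteq> {}" using Kt_space[OF m n] Pd_Kt by auto
    show "tensor_open 2 m n {T \<in> tensor_space 2 m n. Pd T \<noteq> 0}" using open_U[OF m n] .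
    show "{T \<in> tensor_space 2 m n. Pd T \<noteq> 0} \<subseteq> {T \<in> tensor_space 2 m n. subrank 2 m n T = r}"
      using witness[OF _ m n] subrank_eq2 \<open>r = 2\<close> by auto
  qed
next
  assume "typical_subrank 2 m n r"
  then obtain U where U: "U \<noteq> {}" "tensor_open 2 m n U" "U \<subseteq> {T \<in> tensor_space 2 m n. subrank 2 m n T = r}"
    unfolding typical_subrank_def by blast
  then obtain T where T: "T \<in> U" by blast
  with U(2) obtain e where e: "e > 0" and E: "\<And>S. S \<in> tensor_space 2 m n \<Longrightarrow>
      (\<forall>i<2. \<forall>j<m. \<forall>k<n. \<bar>S i j k - T i j k\<bar> < e) \<Longrightarrow> S \<in> U"
    unfolding tensor_open_def by blast
  have Tsp: "T \<in> tensor_space 2 m n" using T U(2) unfolding tensor_open_def by blast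
  define Q where "Q = Pd (\<lambda>i j k. [:Kt i j k, T i j k:])"
  have "poly Q 0 = 1" unfolding Q_def Pd_poly by (simp add: Pd_Kt)
  then have "Q \<noteq> 0" by auto
  then have fin: "finite {x. poly Q x = 0}" by (rule poly_roots_finite)
  define u where "u = max (1 / e) (Max (insert 0 {x. poly Q x = 0})) + 1"
  have u_gt: "u > Max (insert 0 {x. poly Q x = 0})" unfolding u_def by simp
  have "poly Q u \<noteq> 0"
  proof
    assume "poly Q u = 0"
    then have "u \<le> Max (insert 0 {x. poly Q x = 0})" using fin by (intro Max_ge) auto
    then show False using u_gt by simp
  qed
  have u0: "u > 0" using u_gt fin by (smt (verit) Max_ge finite_insert insertI1)
  have ue: "1 / e < u" unfolding u_def by simp
  define s where "s = 1 / u"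
  have s0: "s > 0" and se: "s < e" using u0 ue e unfolding s_def by (auto simp: field_simps)
  define S where "S = (\<lambda>i j k. T i j k + s * Kt i j k)"
  have "S = (\<lambda>i j k. s * (Kt i j k + u * T i j k))"
    using u0 unfolding S_def s_def by (auto simp: field_simps)
  then have "Pd S = s^6 * poly Q u" unfolding Q_def Pd_poly by (simp add: Pd_hom)
  then have PS: "Pd S \<noteq> 0" using s0 \<open>poly Q u \<noteq> 0\<close> by simp
  have Ssp: "S \<in> tensor_space 2 m n"
    using Tsp Kt_space[OF m n] unfolding S_def tensor_space_def by auto
  have "\<bar>S i j k - T i j k\<bar> < e" for i j k
  proof -
    have "\<bar>S i j k - T i j k\<bar> = s * \<bar>Kt i j k\<bar>" using s0 by (simp add: S_def abs_mult)
    also have "\<dots> \<le> s" using Kt_le[of i j k] s0 by (simp add: mult_left_le)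
    finally show ?thesis using se by simp
  qed
  then have "S \<in> U" using E Ssp by blast
  then have "subrank 2 m n S = r" using U(3) by blast
  moreover have "subrank 2 m n S = 2" using witness[OF PS m n] subrank_eq2 by blast
  ultimately show "r = 2" by simp
qed

definition sw :: "(nat \<Rightarrow> nat \<Rightarrow> nat \<Rightarrow> real) \<Rightarrow> nat \<Rightarrow> nat \<Rightarrow> nat \<Rightarrow> real" where
  "sw T = (\<lambda>i j k. T i k j)"

lemma sw_sw[simp]: "sw (sw T) = T" by (simp add: sw_def)

lemma tapply_swap: "tensor_apply n1 m n A B C T a b c = tensor_apply n1 n m A C B (sw T) a c b"
  unfolding tensor_apply_def sw_def
  by (rule sum.cong[OF refl], subst sum.swap) (simp add: ac_simps)

lemma rtu_swap: "restricts_to_unit n1 m n T r \<Longrightarrow> restricts_to_unit n1 n m (sw T) r"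
  unfolding restricts_to_unit_def
proof (elim exE)
  fix A B C assume H: "\<forall>a<r. \<forall>b<r. \<forall>c<r. tensor_apply n1 m n A B C T a b c = unit_tensor a b c"
  show "\<exists>A B C. \<forall>a<r. \<forall>b<r. \<forall>c<r. tensor_apply n1 n m A B C (sw T) a b c = unit_tensor a b c"
    by (rule exI[of _ A], rule exI[of _ C], rule exI[of _ B])
       (use H in \<open>auto simp: tapply_swap[symmetric] unit_tensor_def\<close>)
qed

lemma subrank_swap: "subrank n1 m n T = subrank n1 n m (sw T)"
proof -
  have "restricts_to_unit n1 m n T = restricts_to_unit n1 n m (sw T)"
    using rtu_swap[of n1 m n T] rtu_swap[of n1 n m "sw T"] by (auto simp: fun_eq_iff)
  then show ?thesis unfolding subrank_def by simp
qed

lemma space_swap: "T \<in> tensor_space n1 m n \<Longrightarrow> sw T \<in> tensor_space n1 n m"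
  by (auto simp: tensor_space_def sw_def)

lemma typical_swap:
  assumes "typical_subrank n1 m n r" shows "typical_subrank n1 n m r"
proof -
  obtain U where U: "U \<noteq> {}" "tensor_open n1 m n U" "U \<subseteq> {T \<in> tensor_space n1 m n. subrank n1 m n T = r}"
    using assms unfolding typical_subrank_def by blast
  have "sw ` U \<noteq> {}" using U(1) by simp
  moreover have "sw ` U \<subseteq> {T \<in> tensor_space n1 n m. subrank n1 n m T = r}"
    using U(3) space_swap subrank_swap by fastforce
  moreover have "tensor_open n1 n m (sw ` U)"
    unfolding tensor_open_def
  proof (intro conjI ballI)
    show "sw ` U \<subseteq> tensor_space n1 n m" using U(3) space_swap by fastforce
    fix T' assume "T' \<in> sw ` U"
    then obtain T where T: "T \<in> U" "T' = sw T" by blast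
    then obtain e where e: "e > 0" and E: "\<forall>S\<in>tensor_space n1 m n.
        (\<forall>i<n1. \<forall>j<m. \<forall>k<n. \<bar>S i j k - T i j k\<bar> < e) \<longrightarrow> S \<in> U"
      using U(2) unfolding tensor_open_def by blast
    show "\<exists>e>0. \<forall>S\<in>tensor_space n1 n m. (\<forall>i<n1. \<forall>j<n. \<forall>k<m. \<bar>S i j k - T' i j k\<bar> < e) \<longrightarrow> S \<in> sw ` U"
    proof (intro exI conjI ballI impI)
      fix S assume S: "S \<in> tensor_space n1 n m" "\<forall>i<n1. \<forall>j<n. \<forall>k<m. \<bar>S i j k - T' i j k\<bar> < e"
      have "sw S \<in> U" using E space_swap[OF S(1)] S(2) T(2) by (auto simp: sw_def)
      then show "S \<in> sw ` U" by (metis image_eqI sw_sw)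
    qed (rule e)
  qed
  ultimately show ?thesis unfolding typical_subrank_def by (intro exI[of _ "sw ` U"] conjI)
qed

theorem theorem4p4:
  fixes m n :: nat
  assumes "m \<ge> 2" and "n \<ge> 2" and "(m, n) \<noteq> (2, 2)"
  shows "\<forall>r. typical_subrank 2 m n r \<longleftrightarrow> r = 2"
proof
  fix r
  show "typical_subrank 2 m n r \<longleftrightarrow> r = 2"
  proof (cases "n \<ge> 3")
    case True
    then show ?thesis using main3 assms(1) by blast
  next
    case False
    then have "m \<ge> 3" using assms by auto
    then have "typical_subrank 2 n m r \<longleftrightarrow> r = 2" using main3 assms(2) by blast
    then show ?thesis using typical_swap by blast
  qed
qed

end
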